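(* Let $\rho$ be a density operator (positive, trace one, on a finite-dimensional or separable Hilbert space) with eigenvalues $\lambda_1\ge\lambda_2\ge\cdots$ listed in nonincreasing order with multiplicity, and for a positive integer $D$ let $\epsilon(D)=\sum_{i\ge D+1}\lambda_i$. Then for every $0<\alpha<1$, $$\epsilon(D)\le \exp\!\Big(\frac{1-\alpha}{\alpha}\Big(S^\alpha(\rho)-\log\frac{D}{1-\alpha}\Big)\Big),$$ i.e. $\log\epsilon(D)\le\frac{1-\alpha}{\alpha}\big(S^\alpha(\rho)-\log\frac{D}{1-\alpha}\big)$ whenever $\epsilon(D)>0$. *)

theory Defs
  imports Complex_Main
begin

text \<open>A density operator is represented by its spectrum: the sequence
  lam 0 \<ge> lam 1 \<ge> ... of its eigenvalues, listed in nonincreasing order with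
  multiplicity (padded with zeros in finite dimension), nonnegative and summing to 1.
  Indexing is 0-based: lam (i-1) is the paper's \<lambda>_i.\<close>

definition density_spectrum :: "(nat \<Rightarrow> real) \<Rightarrow> bool" where
  "density_spectrum lam \<longleftrightarrow> (\<forall>i. 0 \<le> lam i) \<and> decseq lam \<and> lam sums 1"

text \<open>Truncation error eps(D) = sum over i \<ge> D+1 of \<lambda>_i (1-based), i.e. lam (D), lam (D+1), ...\<close>
definition tail_mass :: "(nat \<Rightarrow> real) \<Rightarrow> nat \<Rightarrow> real" where
  "tail_mass lam D = (\<Sum>i. lam (i + D))"

definition renyi_entropy :: "real \<Rightarrow> (nat \<Rightarrow> real) \<Rightarrow> real" where
  "renyi_entropy \<alpha> lam = ln (\<Sum>i. lam i powr \<alpha>) / (1 - \<alpha>)"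

end

theory Submission
  imports Defs "HOL-Analysis.Analysis"
begin

lemma key_ineq:
  fixes A B \<alpha> :: real
  assumes "0 \<le> A" "0 \<le> B" "0 < \<alpha>" "\<alpha> < 1"
  shows "A powr (1-\<alpha>) * B powr \<alpha> \<le> (1-\<alpha>) powr (1-\<alpha>) * (A + B)"
proof (cases "A = 0 \<or> B = 0")
  case True
  then show ?thesis using assms by auto
next
  case False
  then have Ap: "A > 0" and Bp: "B > 0" using assms by auto
  have y: "(A/(1-\<alpha>)) powr (1-\<alpha>) * (B/\<alpha>) powr \<alpha> \<le> (1-\<alpha>)*(A/(1-\<alpha>)) + \<alpha>*(B/\<alpha>)"
    by (rule Youngs_inequality_0) (use assms Ap Bp in auto)
  have e: "(1-\<alpha>)*(A/(1-\<alpha>)) + \<alpha>*(B/\<alpha>) = A + B" using assms by simp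
  have "A powr (1-\<alpha>) * B powr \<alpha> = ((1-\<alpha>) powr (1-\<alpha>) * \<alpha> powr \<alpha>) *
      ((A/(1-\<alpha>)) powr (1-\<alpha>) * (B/\<alpha>) powr \<alpha>)"
    using assms Ap Bp by (simp add: powr_divide)
  also have "\<dots> \<le> ((1-\<alpha>) powr (1-\<alpha>) * \<alpha> powr \<alpha>) * (A + B)"
    using y e by (intro mult_left_mono) auto
  also have "\<dots> \<le> ((1-\<alpha>) powr (1-\<alpha>) * 1) * (A + B)"
  proof -
    have "\<alpha> powr \<alpha> \<le> 1 powr \<alpha>" using assms by (intro powr_mono2) auto
    then show ?thesis using Ap Bp by (intro mult_right_mono mult_left_mono) auto
  qed
  finally show ?thesis by simp
qed

theorem lemma2:
  fixes lam :: "nat \<Rightarrow> real" and D :: nat and \<alpha> :: real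
  assumes "density_spectrum lam"
    and "D \<ge> 1"
    and "0 < \<alpha>" and "\<alpha> < 1"
    and "summable (\<lambda>i. lam i powr \<alpha>)"
  shows "tail_mass lam D \<le> exp ((1 - \<alpha>) / \<alpha> * (renyi_entropy \<alpha> lam - ln (real D / (1 - \<alpha>))))"
proof -
  have nn: "\<And>i. 0 \<le> lam i" and dec: "decseq lam" and ss: "lam sums 1"
    using assms(1) unfolding density_spectrum_def by auto
  have sl: "summable lam" using ss by (auto simp: sums_iff)
  define L where "L = lam (D - 1)"
  have L0: "0 \<le> L" using nn L_def by simp
  have leL: "\<And>i. lam (i + D) \<le> L" unfolding L_def using dec by (simp add: decseq_def)
  have geL: "\<And>i. i < D \<Longrightarrow> L \<le> lam i" unfolding L_def using dec by (simp add: decseq_def)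
  define f where "f i = lam i powr \<alpha>" for i
  have sf: "summable f" using assms(5) unfolding f_def[abs_def] .
  have f0: "\<And>i. 0 \<le> f i" by (simp add: f_def)
  define eps where "eps = tail_mass lam D"
  define A where "A = (\<Sum>i<D. f i)"
  define B where "B = (\<Sum>i. f (i + D))"
  define T where "T = (\<Sum>i. f i)"
  have sfD: "summable (\<lambda>i. f (i + D))" using sf by (rule summable_ignore_initial_segment)
  have slD: "summable (\<lambda>i. lam (i + D))" using sl by (rule summable_ignore_initial_segment)
  have TAB: "T = A + B" unfolding T_def A_def B_def using suminf_split_initial_segment[OF sf, of D] by simp
  have A0: "0 \<le> A" unfolding A_def using f0 by (simp add: sum_nonneg)
  have B0: "0 \<le> B" unfolding B_def using f0 sfD by (simp add: suminf_nonneg)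
  have eps0: "0 \<le> eps" unfolding eps_def tail_mass_def using nn slD by (simp add: suminf_nonneg)
  have pt: "lam (i + D) \<le> L powr (1-\<alpha>) * f (i + D)" for i
  proof (cases "lam (i + D) = 0")
    case True then show ?thesis using L0 f0 by simp
  next
    case False
    then have p: "lam (i+D) > 0" using nn[of "i+D"] by simp
    have "lam (i+D) = lam (i+D) powr \<alpha> * lam (i+D) powr (1-\<alpha>)"
      using p by (simp add: powr_add[symmetric])
    also have "\<dots> \<le> lam (i+D) powr \<alpha> * L powr (1-\<alpha>)"
      using assms(4) leL[of i] p by (intro mult_left_mono powr_mono2) auto
    finally show ?thesis by (simp add: f_def mult.commute)
  qed
  have epsB: "eps \<le> L powr (1-\<alpha>) * B"
  proof -
    have "eps \<le> (\<Sum>i. L powr (1-\<alpha>) * f (i + D))"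
      unfolding eps_def tail_mass_def
      by (rule suminf_le[OF pt slD summable_mult[OF sfD]])
    also have "\<dots> = L powr (1-\<alpha>) * B" unfolding B_def by (rule suminf_mult[OF sfD])
    finally show ?thesis .
  qed
  have DA: "real D * L powr \<alpha> \<le> A"
  proof -
    have "of_nat (card {..<D}) * L powr \<alpha> \<le> A" unfolding A_def
      by (rule sum_bounded_below) (use geL L0 assms(3) in \<open>auto simp: f_def intro!: powr_mono2\<close>)
    then show ?thesis by simp
  qed
  have Dp: "real D > 0" using assms(2) by simp
  have LA: "L powr \<alpha> \<le> A / real D" using DA Dp by (simp add: field_simps)
  have "eps powr \<alpha> \<le> (L powr (1-\<alpha>) * B) powr \<alpha>"
    using eps0 epsB assms(3) by (intro powr_mono2) auto
  also have "\<dots> = (L powr \<alpha>) powr (1-\<alpha>) * B powr \<alpha>"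
    using L0 B0 by (simp add: powr_mult powr_powr mult.commute)
  also have "\<dots> \<le> (A / real D) powr (1-\<alpha>) * B powr \<alpha>"
    using LA assms(4) by (intro mult_right_mono powr_mono2) auto
  also have "\<dots> = (A powr (1-\<alpha>) * B powr \<alpha>) / real D powr (1-\<alpha>)"
    using A0 Dp by (simp add: powr_divide)
  also have "\<dots> \<le> ((1-\<alpha>) powr (1-\<alpha>) * T) / real D powr (1-\<alpha>)"
    using key_ineq[OF A0 B0 assms(3,4)] TAB Dp by (intro divide_right_mono) auto
  finally have E: "eps powr \<alpha> \<le> T * ((1-\<alpha>)/real D) powr (1-\<alpha>)"
    using assms(4) Dp by (simp add: powr_divide mult.commute)
  define R where "R = exp ((1 - \<alpha>) / \<alpha> * (renyi_entropy \<alpha> lam - ln (real D / (1 - \<alpha>))))"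
  show ?thesis
  proof (cases "T = 0")
    case True
    then have "B = 0" using TAB A0 B0 by simp
    then have "eps \<le> 0" using epsB by simp
    then show ?thesis unfolding eps_def by (smt (verit) exp_gt_zero)
  next
    case False
    then have Tp: "T > 0" using TAB A0 B0 by simp
    have "R powr \<alpha> = exp (\<alpha> * ((1 - \<alpha>) / \<alpha> * (ln T / (1-\<alpha>) - ln (real D / (1 - \<alpha>)))))"
      unfolding R_def renyi_entropy_def T_def f_def by (simp add: powr_def)
    also have "\<dots> = exp (ln T - (1-\<alpha>) * ln (real D / (1 - \<alpha>)))"
      using assms(3,4) by (simp add: field_simps)
    also have "\<dots> = T * ((1-\<alpha>)/real D) powr (1-\<alpha>)"
      using Tp Dp assms(4) by (simp add: exp_diff powr_def ln_div field_simps exp_add)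
    finally have "eps powr \<alpha> \<le> R powr \<alpha>" using E by simp
    then have "(eps powr \<alpha>) powr (1/\<alpha>) \<le> (R powr \<alpha>) powr (1/\<alpha>)"
      using powr_mono2[of "1/\<alpha>" "eps powr \<alpha>" "R powr \<alpha>"] assms(3) by simp
    moreover have "R \<ge> 0" unfolding R_def by simp
    ultimately have "eps \<le> R" using eps0 assms(3) by (simp add: powr_powr)
    then show ?thesis unfolding eps_def R_def .
  qed
qed

end
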